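(* Fix a positive integer $N$. For every $\epsilon>0$ there exists $K_\epsilon>0$ such that for every Riemann integrable $\varphi:\mathbb T\to\mathbb C$, $$\limsup_{\substack{q\to\infty\\ d(q)\le N}}\frac{1}{\phi(q)}\Big|\big\{p\in\mathbb Z_q^\times: q^{-1/2}|g_\varphi(p,q)|>K_\epsilon\big\}\Big|\le\epsilon\,\|\varphi\|_2^2 .$$
   Context: $\mathbb T=\mathbb R/\mathbb Z$; $\|\varphi\|_2$ is the $L^2(\mathbb T)$ norm. $d(q)$ is the number of positive divisors of $q$. $\mathbb Z_q^\times=\{p\in\{1,\dots,q\}:\gcd(p,q)=1\}$, $\phi(q)=|\mathbb Z_q^\times|$. $e_q(x)=e^{2\pi i x/q}$ and $g_\varphi(p,q)=\sum_{h=0}^{q-1}\varphi(h/q)\,e_q(ph^2)$. *)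

theory Defs
  imports "HOL-Analysis.Analysis" "HOL-Number_Theory.Totient"
begin

text \<open>Functions on T = R/Z are represented by their values on [0,1) (as functions
real => complex whose values outside [0,1) are irrelevant).\<close>

definition riemann_integrable_real :: "(real \<Rightarrow> real) \<Rightarrow> real \<Rightarrow> real \<Rightarrow> bool" where
  "riemann_integrable_real f a b \<longleftrightarrow>
     bounded (f ` {a..b}) \<and>
     (\<forall>e>0. \<exists>(n::nat) (x::nat \<Rightarrow> real).
        x 0 = a \<and> x n = b \<and> (\<forall>i<n. x i < x (Suc i)) \<and>
        (\<Sum>i<n. (x (Suc i) - x i) *
            (Sup (f ` {x i..x (Suc i)}) - Inf (f ` {x i..x (Suc i)}))) < e)"

definition riemann_integrable_T :: "(real \<Rightarrow> complex) \<Rightarrow> bool" where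
  "riemann_integrable_T \<phi> \<longleftrightarrow>
     riemann_integrable_real (\<lambda>x. Re (\<phi> x)) 0 1 \<and> riemann_integrable_real (\<lambda>x. Im (\<phi> x)) 0 1"

definition L2_norm_sq :: "(real \<Rightarrow> complex) \<Rightarrow> real" where
  "L2_norm_sq \<phi> = integral {0..1} (\<lambda>x. (cmod (\<phi> x))^2)"

definition num_divisors :: "nat \<Rightarrow> nat" where
  "num_divisors q = card {d. 0 < d \<and> d dvd q}"

definition units_mod :: "nat \<Rightarrow> nat set" where
  "units_mod q = {p \<in> {1..q}. coprime p q}"

definition e_q :: "nat \<Rightarrow> real \<Rightarrow> complex" where
  "e_q q x = exp (2 * pi * \<i> * complex_of_real (x / real q))"

definition gsum :: "(real \<Rightarrow> complex) \<Rightarrow> nat \<Rightarrow> nat \<Rightarrow> complex" where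
  "gsum \<phi> p q = (\<Sum>h<q. \<phi> (real h / real q) * e_q q (real (p * h^2)))"

end

theory Submission
  imports Defs
begin

lemma part_mono:
  fixes x :: "nat \<Rightarrow> real"
  assumes inc: "\<forall>i<m. x i < x (Suc i)" and "i \<le> j" "j \<le> m"
  shows "x i \<le> x j"
  using assms(2,3)
proof (induction j)
  case 0 then show ?case by simp
next
  case (Suc j)
  show ?case
  proof (cases "i = Suc j")
    case False
    then have "x i \<le> x j" using Suc by simp
    also have "x j < x (Suc j)" using inc Suc.prems by simp
    finally show ?thesis by simp
  qed simp
qed

lemma part_cover_open:
  fixes x :: "nat \<Rightarrow> real"
  assumes inc: "\<forall>i<m. x i < x (Suc i)" and "x 0 \<le> t" "t < x m"
  shows "\<exists>i<m. x i \<le> t \<and> t < x (Suc i)"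
  using assms
proof (induction m)
  case 0 then show ?case by simp
next
  case (Suc m)
  show ?case
  proof (cases "t < x m")
    case True
    then obtain i where "i<m" "x i \<le> t \<and> t < x (Suc i)" using Suc by auto
    then show ?thesis by (intro exI[of _ i]) auto
  next
    case False
    then show ?thesis using Suc.prems by (intro exI[of _ m]) auto
  qed
qed

lemma part_cover_closed:
  fixes x :: "nat \<Rightarrow> real"
  assumes inc: "\<forall>i<m. x i < x (Suc i)" and "x 0 \<le> t" "t \<le> x m" "0 < m"
  shows "\<exists>i<m. x i \<le> t \<and> t \<le> x (Suc i)"
proof (cases "t < x m")
  case True
  then show ?thesis using part_cover_open[OF inc assms(2)] by fastforce
next
  case False
  then have "t = x m" using assms by simp
  moreover have "x (m - 1) \<le> x m" using part_mono[OF inc, of "m-1" m] by simp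
  ultimately show ?thesis using assms(4) by (intro exI[of _ "m-1"]) auto
qed

lemma part_disj:
  fixes x :: "nat \<Rightarrow> real"
  assumes inc: "\<forall>i<m. x i < x (Suc i)" and "i < m" "j < m"
    and "x i < t" "t < x (Suc i)" "x j < t" "t < x (Suc j)"
  shows "i = j"
proof (rule ccontr)
  assume "i \<noteq> j"
  then consider "i < j" | "j < i" by linarith
  then show False
  proof cases
    case 1
    then have "x (Suc i) \<le> x j" using part_mono[OF inc, of "Suc i" j] assms by simp
    then show False using assms by simp
  next
    case 2
    then have "x (Suc j) \<le> x i" using part_mono[OF inc, of "Suc j" i] assms by simp
    then show False using assms by simp
  qed
qed

lemma step_int_closed:
  fixes a b c :: real
  assumes "0 \<le> a" "a \<le> b" "b \<le> 1"
  shows "((\<lambda>t. if t \<in> {a..b} then c else 0) has_integral c * (b - a)) {0..1}"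
proof -
  have "((\<lambda>t. c) has_integral c * (b - a)) {a..b}"
    using has_integral_const_real[of c a b] assms by (simp add: mult.commute)
  then show ?thesis using assms by (subst has_integral_restrict) auto
qed

lemma step_int_open:
  fixes a b c :: real
  assumes "0 \<le> a" "a \<le> b" "b \<le> 1"
  shows "((\<lambda>t. if t \<in> {a<..<b} then c else 0) has_integral c * (b - a)) {0..1}"
  by (rule has_integral_spike_finite[OF _ _ step_int_closed[OF assms, of c], where S="{a,b}"]) auto

lemma card_grid:
  fixes a b :: real and n :: nat
  assumes "n > 0" "0 \<le> a" "a \<le> b"
  shows "real (card {j. j < n \<and> a \<le> real j / real n \<and> real j / real n < b}) \<le> real n * (b - a) + 1"
proof -
  let ?A = "{j. j < n \<and> a \<le> real j / real n \<and> real j / real n < b}"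
  have sub: "?A \<subseteq> {nat \<lceil>real n * a\<rceil> ..< nat \<lceil>real n * b\<rceil>}"
  proof
    fix j assume "j \<in> ?A"
    then have j: "a \<le> real j / real n" "real j / real n < b" by auto
    have "real n * a \<le> real j" using j(1) assms(1) by (simp add: field_simps)
    then have c1: "\<lceil>real n * a\<rceil> \<le> int j" by (simp add: ceiling_le_iff)
    have "real j < real n * b" using j(2) assms(1) by (simp add: field_simps)
    then have "int j < \<lceil>real n * b\<rceil>" by (simp add: less_ceiling_iff)
    with c1 have "nat \<lceil>real n * a\<rceil> \<le> j" "j < nat \<lceil>real n * b\<rceil>" by (simp_all add: nat_le_iff zless_nat_eq_int_zless)
    then show "j \<in> {nat \<lceil>real n * a\<rceil> ..< nat \<lceil>real n * b\<rceil>}" by simp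
  qed
  have "card ?A \<le> nat \<lceil>real n * b\<rceil> - nat \<lceil>real n * a\<rceil>"
    using card_mono[OF _ sub] by simp
  moreover have "real (nat \<lceil>real n * b\<rceil> - nat \<lceil>real n * a\<rceil>) \<le> real n * (b - a) + 1"
  proof -
    have na: "0 \<le> real n * a" using assms by simp
    have nb: "real n * a \<le> real n * b" using assms by (simp add: mult_left_mono)
    have c1: "of_int \<lceil>real n * b\<rceil> < real n * b + 1" by linarith
    have c2: "real n * a \<le> of_int \<lceil>real n * a\<rceil>" by linarith
    have c3: "\<lceil>real n * a\<rceil> \<le> \<lceil>real n * b\<rceil>" using nb by (simp add: ceiling_mono)
    have c4: "0 \<le> \<lceil>real n * a\<rceil>" using na by linarith
    have "real (nat \<lceil>real n * b\<rceil> - nat \<lceil>real n * a\<rceil>) = of_int \<lceil>real n * b\<rceil> - of_int \<lceil>real n * a\<rceil>"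
    proof -
      have "nat \<lceil>real n * b\<rceil> - nat \<lceil>real n * a\<rceil> = nat (\<lceil>real n * b\<rceil> - \<lceil>real n * a\<rceil>)"
        using c3 c4 by (simp add: nat_diff_distrib)
      then show ?thesis using c3 by simp
    qed
    moreover have "real n * (b - a) = real n * b - real n * a" by (simp add: algebra_simps)
    ultimately show ?thesis using c1 c2 by linarith
  qed
  ultimately show ?thesis by (meson of_nat_le_iff order_trans)
qed

lemma part_in01:
  fixes x :: "nat \<Rightarrow> real"
  assumes inc: "\<forall>i<m. x i < x (Suc i)" and x0: "x 0 = 0" and xm: "x m = 1" and "i < m"
  shows "0 \<le> x i" "x (Suc i) \<le> 1" "x i \<le> x (Suc i)" "{x i..x (Suc i)} \<subseteq> {0..1}"
proof -
  show "0 \<le> x i" using part_mono[OF inc, of 0 i] assms by simp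
  moreover show "x (Suc i) \<le> 1" using part_mono[OF inc, of "Suc i" m] assms by simp
  moreover show "x i \<le> x (Suc i)" using inc assms by auto
  ultimately show "{x i..x (Suc i)} \<subseteq> {0..1}" by auto
qed

lemma sup_inf_facts:
  fixes f :: "real \<Rightarrow> real"
  assumes bnd: "bounded (f ` {0..1})" and sub: "{a..b} \<subseteq> {0..1}" and ab: "a \<le> b"
    and t: "t \<in> {a..b}"
  shows "f t \<le> Sup (f ` {a..b})" "Inf (f ` {a..b}) \<le> f t"
proof -
  have "bdd_above (f ` {a..b})"
    using bdd_above_mono[OF bounded_imp_bdd_above[OF bnd] image_mono[OF sub]] .
  then show "f t \<le> Sup (f ` {a..b})" using t by (intro cSup_upper) auto
  have "bdd_below (f ` {a..b})"
    using bdd_below_mono[OF bounded_imp_bdd_below[OF bnd] image_mono[OF sub]] .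
  then show "Inf (f ` {a..b}) \<le> f t" using t by (intro cInf_lower) auto
qed

lemma inf_nonneg:
  fixes f :: "real \<Rightarrow> real"
  assumes "a \<le> b" "\<And>t. t \<in> {a..b} \<Longrightarrow> 0 \<le> f t"
  shows "0 \<le> Inf (f ` {a..b})"
  using assms by (intro cInf_greatest) auto

lemma riemann_part:
  fixes f :: "real \<Rightarrow> real" and x :: "nat \<Rightarrow> real"
  assumes inc: "\<forall>i<m. x i < x (Suc i)" and x0: "x 0 = 0" and xm: "x m = 1"
    and nn: "\<And>t. t \<in> {0..1} \<Longrightarrow> 0 \<le> f t" and bnd: "bounded (f ` {0..1})"
  defines "Su \<equiv> \<lambda>i. Sup (f ` {x i..x (Suc i)})" and "In \<equiv> \<lambda>i. Inf (f ` {x i..x (Suc i)})"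
  shows "((\<lambda>t. \<Sum>i<m. if t \<in> {x i..x (Suc i)} then Su i else 0) has_integral (\<Sum>i<m. Su i * (x (Suc i) - x i))) {0..1}"
    and "((\<lambda>t. \<Sum>i<m. if t \<in> {x i<..<x (Suc i)} then In i else 0) has_integral (\<Sum>i<m. In i * (x (Suc i) - x i))) {0..1}"
    and "\<forall>t\<in>{0..1}. (\<Sum>i<m. if t \<in> {x i<..<x (Suc i)} then In i else 0) \<le> f t \<and>
                     f t \<le> (\<Sum>i<m. if t \<in> {x i..x (Suc i)} then Su i else 0)"
    and "\<And>n. n > 0 \<Longrightarrow> (\<Sum>j<n. f (real j / real n)) \<le> real n * (\<Sum>i<m. Su i * (x (Suc i) - x i)) + (\<Sum>i<m. Su i)"
proof -
  note P = part_in01[OF inc x0 xm]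
  have SuI: "f t \<le> Su i" "In i \<le> f t" if "i < m" "t \<in> {x i..x (Suc i)}" for i t
    using sup_inf_facts[OF bnd P(4)[OF that(1)] P(3)[OF that(1)] that(2)] unfolding Su_def In_def by auto
  have Su0: "0 \<le> Su i" if "i < m" for i
    using SuI(1)[OF that, of "x i"] nn[of "x i"] P[OF that] by auto
  have In0: "0 \<le> In i" if "i < m" for i
    unfolding In_def using P[OF that] nn by (intro inf_nonneg) auto
  show "((\<lambda>t. \<Sum>i<m. if t \<in> {x i..x (Suc i)} then Su i else 0) has_integral (\<Sum>i<m. Su i * (x (Suc i) - x i))) {0..1}"
    by (intro has_integral_sum finite_lessThan) (use step_int_closed[OF P(1,3,2)] in blast)
  show "((\<lambda>t. \<Sum>i<m. if t \<in> {x i<..<x (Suc i)} then In i else 0) has_integral (\<Sum>i<m. In i * (x (Suc i) - x i))) {0..1}"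
    by (intro has_integral_sum finite_lessThan) (use step_int_open[OF P(1,3,2)] in blast)
  have m0: "0 < m" using x0 xm by (cases m) auto
  show "\<forall>t\<in>{0..1}. (\<Sum>i<m. if t \<in> {x i<..<x (Suc i)} then In i else 0) \<le> f t \<and>
                     f t \<le> (\<Sum>i<m. if t \<in> {x i..x (Suc i)} then Su i else 0)"
  proof
    fix t :: real assume t: "t \<in> {0..1}"
    obtain i where i: "i < m" "x i \<le> t" "t \<le> x (Suc i)"
      using part_cover_closed[OF inc, of t] t x0 xm m0 by auto
    have "f t \<le> Su i" using SuI(1)[OF i(1)] i by auto
    also have "\<dots> = (if t \<in> {x i..x (Suc i)} then Su i else 0)" using i by simp
    also have "\<dots> \<le> (\<Sum>i<m. if t \<in> {x i..x (Suc i)} then Su i else 0)"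
      by (rule member_le_sum) (use i Su0 in auto)
    finally have up: "f t \<le> (\<Sum>i<m. if t \<in> {x i..x (Suc i)} then Su i else 0)" .
    have lo: "(\<Sum>i<m. if t \<in> {x i<..<x (Suc i)} then In i else 0) \<le> f t"
    proof (cases "\<exists>k<m. t \<in> {x k<..<x (Suc k)}")
      case True
      then obtain k where k: "k < m" "t \<in> {x k<..<x (Suc k)}" by auto
      have "(\<Sum>i<m. if t \<in> {x i<..<x (Suc i)} then In i else 0) = (\<Sum>i\<in>{k}. if t \<in> {x i<..<x (Suc i)} then In i else 0)"
      proof (rule sum.mono_neutral_right)
        show "\<forall>i\<in>{..<m} - {k}. (if t \<in> {x i<..<x (Suc i)} then In i else 0) = 0"
        proof
          fix i assume i: "i \<in> {..<m} - {k}"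
          have "t \<notin> {x i<..<x (Suc i)}"
          proof
            assume "t \<in> {x i<..<x (Suc i)}"
            then have "i = k" using part_disj[OF inc, of i k t] i k by simp
            then show False using i by simp
          qed
          then show "(if t \<in> {x i<..<x (Suc i)} then In i else 0) = 0" by (simp only: if_False)
        qed
      qed (use k in simp_all)
      also have "\<dots> = In k" using k by simp
      also have "\<dots> \<le> f t" using SuI(2)[OF k(1)] k by auto
      finally show ?thesis .
    next
      case False
      then have "(\<Sum>i<m. if t \<in> {x i<..<x (Suc i)} then In i else 0) = 0" by (intro sum.neutral) auto
      then show ?thesis using nn t by simp
    qed
    show "(\<Sum>i<m. if t \<in> {x i<..<x (Suc i)} then In i else 0) \<le> f t \<and>
                     f t \<le> (\<Sum>i<m. if t \<in> {x i..x (Suc i)} then Su i else 0)" using up lo by simp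
  qed
  fix n :: nat assume n: "n > 0"
  let ?J = "\<lambda>i. {j. j < n \<and> x i \<le> real j / real n \<and> real j / real n < x (Suc i)}"
  have "(\<Sum>j<n. f (real j / real n)) \<le> (\<Sum>j<n. \<Sum>i<m. if x i \<le> real j / real n \<and> real j / real n < x (Suc i) then Su i else 0)"
  proof (rule sum_mono)
    fix j assume j: "j \<in> {..<n}"
    have t: "0 \<le> real j / real n" "real j / real n < 1" using j n by auto
    obtain i where i: "i < m" "x i \<le> real j / real n" "real j / real n < x (Suc i)"
      using part_cover_open[OF inc, of "real j / real n"] t x0 xm by auto
    have "f (real j / real n) \<le> Su i" using SuI(1)[OF i(1)] i by auto
    also have "\<dots> = (if x i \<le> real j / real n \<and> real j / real n < x (Suc i) then Su i else 0)" using i by simp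
    also have "\<dots> \<le> (\<Sum>i<m. if x i \<le> real j / real n \<and> real j / real n < x (Suc i) then Su i else 0)"
      by (rule member_le_sum) (use i Su0 in auto)
    finally show "f (real j / real n) \<le> (\<Sum>i<m. if x i \<le> real j / real n \<and> real j / real n < x (Suc i) then Su i else 0)" .
  qed
  also have "\<dots> = (\<Sum>i<m. \<Sum>j<n. if x i \<le> real j / real n \<and> real j / real n < x (Suc i) then Su i else 0)"
    by (rule sum.swap)
  also have "\<dots> = (\<Sum>i<m. Su i * real (card (?J i)))"
  proof (rule sum.cong[OF refl])
    fix i assume "i \<in> {..<m}"
    have "(\<Sum>j<n. if x i \<le> real j / real n \<and> real j / real n < x (Suc i) then Su i else 0)
        = (\<Sum>j\<in>{j\<in>{..<n}. x i \<le> real j / real n \<and> real j / real n < x (Suc i)}. Su i)"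
      by (rule sum.inter_filter[symmetric]) simp
    also have "{j\<in>{..<n}. x i \<le> real j / real n \<and> real j / real n < x (Suc i)} = ?J i" by auto
    finally show "(\<Sum>j<n. if x i \<le> real j / real n \<and> real j / real n < x (Suc i) then Su i else 0) = Su i * real (card (?J i))"
      by simp
  qed
  also have "\<dots> \<le> (\<Sum>i<m. Su i * (real n * (x (Suc i) - x i) + 1))"
    by (intro sum_mono mult_left_mono card_grid n) (auto intro: Su0 P)
  also have "\<dots> = real n * (\<Sum>i<m. Su i * (x (Suc i) - x i)) + (\<Sum>i<m. Su i)"
  proof -
    have "(\<Sum>i<m. Su i * (real n * (x (Suc i) - x i) + 1)) = (\<Sum>i<m. real n * (Su i * (x (Suc i) - x i)) + Su i)"
      by (rule sum.cong) (simp_all add: algebra_simps)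
    then show ?thesis by (simp add: sum.distrib sum_distrib_left)
  qed
  finally show "(\<Sum>j<n. f (real j / real n)) \<le> real n * (\<Sum>i<m. Su i * (x (Suc i) - x i)) + (\<Sum>i<m. Su i)" .
qed

lemma riemann_main:
  fixes f :: "real \<Rightarrow> real"
  assumes nn: "\<And>t. t \<in> {0..1} \<Longrightarrow> 0 \<le> f t" and ri: "riemann_integrable_real f 0 1"
  shows "f integrable_on {0..1}"
    and "\<And>\<delta>. \<delta> > 0 \<Longrightarrow> \<exists>n0. \<forall>n\<ge>n0. (\<Sum>j<n. f (real j / real n)) \<le> real n * (integral {0..1} f + \<delta>)"
proof -
  have bnd: "bounded (f ` {0..1})" using ri unfolding riemann_integrable_real_def by simp
  have part: "\<exists>(m::nat) (x::nat \<Rightarrow> real). x 0 = 0 \<and> x m = 1 \<and> (\<forall>i<m. x i < x (Suc i)) \<and>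
        (\<Sum>i<m. (x (Suc i) - x i) * (Sup (f ` {x i..x (Suc i)}) - Inf (f ` {x i..x (Suc i)}))) < e" if "e > 0" for e
    using ri that unfolding riemann_integrable_real_def by simp
  have key: "\<exists>g h i j. (g has_integral i) {0..1} \<and> (h has_integral j) {0..1} \<and> j - i < e \<and>
     (\<forall>t\<in>{0..1}. g t \<le> f t \<and> f t \<le> h t) \<and>
     (\<forall>n>0. (\<Sum>j<n. f (real j / real n)) \<le> real n * j + (\<Sum>i<m. Sup (f ` {x i..x (Suc i)})))"
    if "x 0 = 0" "x m = 1" "\<forall>i<m. x i < x (Suc i)"
       "(\<Sum>i<m. (x (Suc i) - x i) * (Sup (f ` {x i..x (Suc i)}) - Inf (f ` {x i..x (Suc i)}))) < e"
    for e m x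
  proof -
    note RP = riemann_part[OF that(3,1,2) nn bnd]
    let ?Su = "\<lambda>i. Sup (f ` {x i..x (Suc i)})" and ?In = "\<lambda>i. Inf (f ` {x i..x (Suc i)})"
    have "(\<Sum>i<m. ?Su i * (x (Suc i) - x i)) - (\<Sum>i<m. ?In i * (x (Suc i) - x i))
       = (\<Sum>i<m. (x (Suc i) - x i) * (?Su i - ?In i))"
      by (simp add: sum_subtractf[symmetric] algebra_simps)
    then have "(\<Sum>i<m. ?Su i * (x (Suc i) - x i)) - (\<Sum>i<m. ?In i * (x (Suc i) - x i)) < e" using that(4) by simp
    then show ?thesis using RP by blast
  qed
  show int: "f integrable_on {0..1}"
  proof (rule integrable_straddle)
    fix e :: real assume e: "e > 0"
    obtain m x where mx: "x 0 = 0" "x m = 1" "\<forall>i<m. x i < x (Suc i)"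
       "(\<Sum>i<m. (x (Suc i) - x i) * (Sup (f ` {x i..x (Suc i)}) - Inf (f ` {x i..x (Suc i)}))) < e"
      using part[OF e] by blast
    obtain g h i j where ghij: "(g has_integral i) {0..1}" "(h has_integral j) {0..1}" "j - i < e"
       "\<forall>t\<in>{0..1}. g t \<le> f t \<and> f t \<le> h t"
      using key[OF mx] by blast
    have "i \<le> j" using has_integral_le[OF ghij(1,2)] ghij(4) by force
    then have "\<bar>i - j\<bar> < e" using ghij(3) by simp
    then show "\<exists>g h i j. (g has_integral i) {0..1} \<and> (h has_integral j) {0..1} \<and>
                     \<bar>i - j\<bar> < e \<and> (\<forall>x\<in>{0..1}. g x \<le> f x \<and> f x \<le> h x)"
      using ghij by blast
  qed
  fix \<delta> :: real assume d: "\<delta> > 0"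
  obtain m x where mx: "x 0 = 0" "x m = 1" "\<forall>i<m. x i < x (Suc i)"
     "(\<Sum>i<m. (x (Suc i) - x i) * (Sup (f ` {x i..x (Suc i)}) - Inf (f ` {x i..x (Suc i)}))) < \<delta>/2"
    using part[of "\<delta>/2"] d by auto
  obtain g h i j where ghij: "(g has_integral i) {0..1}" "(h has_integral j) {0..1}" "j - i < \<delta>/2"
     "\<forall>t\<in>{0..1}. g t \<le> f t \<and> f t \<le> h t"
     "\<forall>n>0. (\<Sum>j<n. f (real j / real n)) \<le> real n * j + (\<Sum>i<m. Sup (f ` {x i..x (Suc i)}))"
    using key[OF mx] by blast
  have "i \<le> integral {0..1} f" using has_integral_le[OF ghij(1) integrable_integral[OF int]] ghij(4) by force
  then have jI: "j \<le> integral {0..1} f + \<delta>/2" using ghij(3) by simp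
  define S where "S = (\<Sum>i<m. Sup (f ` {x i..x (Suc i)}))"
  define n0 where "n0 = nat \<lceil>2 * \<bar>S\<bar> / \<delta>\<rceil> + 1"
  show "\<exists>n0. \<forall>n\<ge>n0. (\<Sum>j<n. f (real j / real n)) \<le> real n * (integral {0..1} f + \<delta>)"
  proof (intro exI allI impI)
    fix n assume n: "n0 \<le> n"
    then have npos: "n > 0" unfolding n0_def by simp
    have "2 * \<bar>S\<bar> / \<delta> \<le> real n0" unfolding n0_def by linarith
    also have "\<dots> \<le> real n" using n by simp
    finally have "2 * \<bar>S\<bar> \<le> real n * \<delta>" using d by (simp add: field_simps)
    then have SS: "S \<le> real n * (\<delta>/2)" by simp
    have "(\<Sum>j<n. f (real j / real n)) \<le> real n * j + S" using ghij(5) npos unfolding S_def by blast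
    also have "\<dots> \<le> real n * (integral {0..1} f + \<delta>/2) + real n * (\<delta>/2)"
      using jI SS by (intro add_mono mult_left_mono) auto
    also have "\<dots> = real n * (integral {0..1} f + \<delta>)" by (simp add: algebra_simps)
    finally show "(\<Sum>j<n. f (real j / real n)) \<le> real n * (integral {0..1} f + \<delta>)" .
  qed
qed

lemma osc_sq:
  fixes w :: "real \<Rightarrow> real"
  assumes bnd: "bounded (w ` {0..1})" and B: "\<And>t. t \<in> {0..1} \<Longrightarrow> \<bar>w t\<bar> \<le> B"
    and sub: "{a..b} \<subseteq> {0..1}" and ab: "a \<le> b"
  shows "Sup ((\<lambda>t. (w t)\<^sup>2) ` {a..b}) - Inf ((\<lambda>t. (w t)\<^sup>2) ` {a..b}) \<le> 2 * B * (Sup (w ` {a..b}) - Inf (w ` {a..b}))"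
    and "0 \<le> Sup (w ` {a..b}) - Inf (w ` {a..b})"
proof -
  let ?C = "2 * B * (Sup (w ` {a..b}) - Inf (w ` {a..b}))"
  note SI = sup_inf_facts[OF bnd sub ab]
  show "0 \<le> Sup (w ` {a..b}) - Inf (w ` {a..b})" using SI[of a] ab by simp
  have st: "(w s)\<^sup>2 \<le> (w t)\<^sup>2 + ?C" if "s \<in> {a..b}" "t \<in> {a..b}" for s t
  proof -
    have d: "\<bar>w s - w t\<bar> \<le> Sup (w ` {a..b}) - Inf (w ` {a..b})" using SI[OF that(1)] SI[OF that(2)] by linarith
    have p: "\<bar>w s + w t\<bar> \<le> 2 * B" using B[of s] B[of t] that sub by force
    have "(w s)\<^sup>2 - (w t)\<^sup>2 = (w s - w t) * (w s + w t)" by (simp add: power2_eq_square algebra_simps)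
    also have "\<dots> \<le> \<bar>w s - w t\<bar> * \<bar>w s + w t\<bar>" by (metis abs_ge_self abs_mult)
    also have "\<dots> \<le> (Sup (w ` {a..b}) - Inf (w ` {a..b})) * (2 * B)"
      using d p by (intro mult_mono) auto
    finally show ?thesis by (simp add: algebra_simps)
  qed
  have "Sup ((\<lambda>t. (w t)\<^sup>2) ` {a..b}) \<le> (w t)\<^sup>2 + ?C" if "t \<in> {a..b}" for t
    using st[OF _ that] ab by (intro cSup_least) auto
  then have "Sup ((\<lambda>t. (w t)\<^sup>2) ` {a..b}) - ?C \<le> Inf ((\<lambda>t. (w t)\<^sup>2) ` {a..b})"
    using ab by (intro cInf_greatest) force+
  then show "Sup ((\<lambda>t. (w t)\<^sup>2) ` {a..b}) - Inf ((\<lambda>t. (w t)\<^sup>2) ` {a..b}) \<le> ?C" by simp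
qed

lemma riemann_sq:
  fixes w :: "real \<Rightarrow> real"
  assumes ri: "riemann_integrable_real w 0 1"
  shows "riemann_integrable_real (\<lambda>t. (w t)\<^sup>2) 0 1"
proof -
  have bnd: "bounded (w ` {0..1})" using ri unfolding riemann_integrable_real_def by simp
  then obtain B0 where B0: "\<forall>y\<in>w ` {0..1}. norm y \<le> B0" by (auto simp: bounded_iff)
  define B where "B = \<bar>B0\<bar> + 1"
  have B: "\<And>t. t \<in> {0..1} \<Longrightarrow> \<bar>w t\<bar> \<le> B" and Bpos: "B > 0" using B0 unfolding B_def by force+
  have bnd2: "bounded ((\<lambda>t. (w t)\<^sup>2) ` {0..1})"
    unfolding bounded_iff
  proof (intro exI ballI)
    fix y assume "y \<in> (\<lambda>t. (w t)\<^sup>2) ` {0..1}"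
    then obtain t where t: "t \<in> {0..1}" "y = (w t)\<^sup>2" by auto
    have "\<bar>w t\<bar> * \<bar>w t\<bar> \<le> B * B" using B[OF t(1)] by (intro mult_mono) auto
    then show "norm y \<le> B * B" using t by (simp add: power2_eq_square abs_mult)
  qed
  show ?thesis unfolding riemann_integrable_real_def
  proof (intro conjI bnd2 allI impI)
    fix e :: real assume e: "e > 0"
    have ep: "e / (2 * B) > 0" using e Bpos by simp
    have ex: "\<forall>e>0. \<exists>(n::nat) (x::nat \<Rightarrow> real). x 0 = 0 \<and> x n = 1 \<and> (\<forall>i<n. x i < x (Suc i)) \<and>
        (\<Sum>i<n. (x (Suc i) - x i) * (Sup (w ` {x i..x (Suc i)}) - Inf (w ` {x i..x (Suc i)}))) < e"
      using ri unfolding riemann_integrable_real_def by (rule conjunct2)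
    obtain m x where mx: "x 0 = 0" "x m = 1" "\<forall>i<m. x i < x (Suc i)"
       "(\<Sum>i<m. (x (Suc i) - x i) * (Sup (w ` {x i..x (Suc i)}) - Inf (w ` {x i..x (Suc i)}))) < e / (2 * B)"
      using ex[rule_format, OF ep] by blast
    note P = part_in01[OF mx(3,1,2)]
    have "(\<Sum>i<m. (x (Suc i) - x i) * (Sup ((\<lambda>t. (w t)\<^sup>2) ` {x i..x (Suc i)}) - Inf ((\<lambda>t. (w t)\<^sup>2) ` {x i..x (Suc i)})))
        \<le> (\<Sum>i<m. (2 * B) * ((x (Suc i) - x i) * (Sup (w ` {x i..x (Suc i)}) - Inf (w ` {x i..x (Suc i)}))))"
    proof (rule sum_mono)
      fix i assume "i \<in> {..<m}"
      then have i: "i < m" by simp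
      have "(x (Suc i) - x i) * (Sup ((\<lambda>t. (w t)\<^sup>2) ` {x i..x (Suc i)}) - Inf ((\<lambda>t. (w t)\<^sup>2) ` {x i..x (Suc i)}))
         \<le> (x (Suc i) - x i) * (2 * B * (Sup (w ` {x i..x (Suc i)}) - Inf (w ` {x i..x (Suc i)})))"
        using osc_sq(1)[OF bnd B P(4)[OF i] P(3)[OF i]] P(3)[OF i] by (intro mult_left_mono) auto
      then show "(x (Suc i) - x i) * (Sup ((\<lambda>t. (w t)\<^sup>2) ` {x i..x (Suc i)}) - Inf ((\<lambda>t. (w t)\<^sup>2) ` {x i..x (Suc i)}))
         \<le> (2 * B) * ((x (Suc i) - x i) * (Sup (w ` {x i..x (Suc i)}) - Inf (w ` {x i..x (Suc i)})))"
        by (simp add: algebra_simps)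
    qed
    also have "\<dots> = (2 * B) * (\<Sum>i<m. (x (Suc i) - x i) * (Sup (w ` {x i..x (Suc i)}) - Inf (w ` {x i..x (Suc i)})))"
      by (simp add: sum_distrib_left)
    also have "\<dots> < (2 * B) * (e / (2 * B))" using mx(4) Bpos by (intro mult_strict_left_mono) auto
    also have "\<dots> = e" using Bpos by simp
    finally show "\<exists>(n::nat) (x::nat \<Rightarrow> real). x 0 = 0 \<and> x n = 1 \<and> (\<forall>i<n. x i < x (Suc i)) \<and>
        (\<Sum>i<n. (x (Suc i) - x i) * (Sup ((\<lambda>t. (w t)\<^sup>2) ` {x i..x (Suc i)}) - Inf ((\<lambda>t. (w t)\<^sup>2) ` {x i..x (Suc i)}))) < e"
      using mx by blast
  qed
qed

definition EE :: "nat \<Rightarrow> int \<Rightarrow> complex" where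
  "EE q k = exp (2 * pi * \<i> * complex_of_real (real_of_int k / real q))"

lemma EE_pow: "EE q (int p * k) = EE q k ^ p"
proof -
  have "EE q (int p * k) = exp (of_nat p * (2 * pi * \<i> * complex_of_real (real_of_int k / real q)))"
    unfolding EE_def by (simp add: algebra_simps)
  also have "\<dots> = EE q k ^ p" unfolding EE_def by (rule exp_of_nat_mult)
  finally show ?thesis .
qed

lemma EE_eq_1:
  assumes "q > 0"
  shows "EE q k = 1 \<longleftrightarrow> int q dvd k"
proof -
  have "EE q k = 1 \<longleftrightarrow> (\<exists>n::int. 2 * pi * (real_of_int k / real q) = real_of_int (2 * n) * pi)"
    unfolding EE_def exp_eq_1 by simp
  also have "\<dots> \<longleftrightarrow> (\<exists>n::int. real_of_int k = real_of_int n * real q)"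
    using assms by (intro ex_cong1) (auto simp: field_simps)
  also have "\<dots> \<longleftrightarrow> (\<exists>n::int. k = n * int q)"
    by (intro ex_cong1) (metis of_int_eq_iff of_int_mult of_int_of_nat_eq)
  also have "\<dots> \<longleftrightarrow> int q dvd k" by (auto simp: dvd_def mult.commute)
  finally show ?thesis .
qed

lemma EE_orth:
  assumes q: "q > 0"
  shows "(\<Sum>p\<in>{1..q}. EE q (int p * k)) = (if int q dvd k then of_nat q else 0)"
proof -
  let ?z = "EE q k"
  have zq: "?z ^ q = 1"
    using EE_pow[of q q k] EE_eq_1[OF q, of "int q * k"] by simp
  have "(\<Sum>p\<in>{1..q}. EE q (int p * k)) = (\<Sum>p\<in>{Suc 0..q}. ?z ^ p)" by (simp add: EE_pow)
  also have "\<dots> = (\<Sum>p<q. ?z ^ Suc p)" by (rule sum.atLeast1_atMost_eq)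
  also have "\<dots> = ?z * (\<Sum>p<q. ?z ^ p)" by (simp add: sum_distrib_left)
  also have "\<dots> = (if int q dvd k then of_nat q else 0)"
    using zq EE_eq_1[OF q, of k] by (auto simp: sum_gp_strict)
  finally show ?thesis .
qed

lemma e_q_prod:
  "e_q q (real (p * h^2)) * cnj (e_q q (real (p * h'^2))) = EE q (int p * (int h^2 - int h'^2))"
proof -
  have "e_q q (real (p * h^2)) * cnj (e_q q (real (p * h'^2)))
      = exp (2 * pi * \<i> * complex_of_real (real (p * h^2) / real q) + cnj (2 * pi * \<i> * complex_of_real (real (p * h'^2) / real q)))"
    unfolding e_q_def by (simp only: exp_cnj mult_exp_exp)
  also have "\<dots> = EE q (int p * (int h^2 - int h'^2))"
    unfolding EE_def by (rule arg_cong[where f=exp], cases "q = 0") (simp_all add: field_simps)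
  finally show ?thesis .
qed

lemma parseval:
  fixes \<phi> :: "real \<Rightarrow> complex"
  assumes q: "q > 0"
  defines "a \<equiv> \<lambda>h. \<phi> (real h / real q)"
  shows "complex_of_real (\<Sum>p\<in>{1..q}. (cmod (gsum \<phi> p q))\<^sup>2)
     = of_nat q * (\<Sum>h<q. \<Sum>h'<q. if int q dvd (int h^2 - int h'^2) then a h * cnj (a h') else 0)"
proof -
  have "complex_of_real (\<Sum>p\<in>{1..q}. (cmod (gsum \<phi> p q))\<^sup>2) = (\<Sum>p\<in>{1..q}. gsum \<phi> p q * cnj (gsum \<phi> p q))"
    by (simp only: of_real_sum complex_norm_square)
  also have "\<dots> = (\<Sum>p\<in>{1..q}. \<Sum>h<q. \<Sum>h'<q. a h * cnj (a h') * EE q (int p * (int h^2 - int h'^2)))"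
  proof (rule sum.cong[OF refl])
    fix p
    have "gsum \<phi> p q * cnj (gsum \<phi> p q) = (\<Sum>h<q. \<Sum>h'<q. (a h * e_q q (real (p * h^2))) * cnj (a h' * e_q q (real (p * h'^2))))"
      unfolding gsum_def a_def by (simp add: sum_product cnj_sum)
    also have "\<dots> = (\<Sum>h<q. \<Sum>h'<q. a h * cnj (a h') * EE q (int p * (int h^2 - int h'^2)))"
      by (intro sum.cong refl) (simp add: e_q_prod[symmetric] mult_ac)
    finally show "gsum \<phi> p q * cnj (gsum \<phi> p q) = (\<Sum>h<q. \<Sum>h'<q. a h * cnj (a h') * EE q (int p * (int h^2 - int h'^2)))" .
  qed
  also have "\<dots> = (\<Sum>h<q. \<Sum>h'<q. a h * cnj (a h') * (\<Sum>p\<in>{1..q}. EE q (int p * (int h^2 - int h'^2))))"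
  proof -
    have "(\<Sum>p\<in>{1..q}. \<Sum>h<q. \<Sum>h'<q. a h * cnj (a h') * EE q (int p * (int h^2 - int h'^2)))
       = (\<Sum>h<q. \<Sum>p\<in>{1..q}. \<Sum>h'<q. a h * cnj (a h') * EE q (int p * (int h^2 - int h'^2)))"
      by (rule sum.swap)
    also have "\<dots> = (\<Sum>h<q. \<Sum>h'<q. \<Sum>p\<in>{1..q}. a h * cnj (a h') * EE q (int p * (int h^2 - int h'^2)))"
      by (rule sum.cong[OF refl], rule sum.swap)
    finally show ?thesis by (simp add: sum_distrib_left)
  qed
  also have "\<dots> = (\<Sum>h<q. \<Sum>h'<q. of_nat q * (if int q dvd (int h^2 - int h'^2) then a h * cnj (a h') else 0))"
    by (intro sum.cong refl) (subst EE_orth[OF q], simp)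
  also have "\<dots> = of_nat q * (\<Sum>h<q. \<Sum>h'<q. if int q dvd (int h^2 - int h'^2) then a h * cnj (a h') else 0)"
    by (simp add: sum_distrib_left)
  finally show ?thesis .
qed

lemma div_split:
  fixes u v :: int
  assumes q: "q > 0" and dv: "int q dvd u * v"
  shows "\<exists>d. d > 0 \<and> d dvd q \<and> int d dvd u \<and> int (q div d) dvd v"
proof -
  define G where "G = gcd u (int q)"
  have Gpos: "G > 0" using q unfolding G_def by simp
  define d where "d = nat G"
  have dG: "int d = G" using Gpos unfolding d_def by simp
  have "G dvd int q" unfolding G_def by simp
  then have dq: "d dvd q" using dG by (metis of_nat_dvd_iff)
  have du: "int d dvd u" using dG unfolding G_def by simp
  have cop: "coprime (u div G) (int q div G)" unfolding G_def using q by (intro div_gcd_coprime) simp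
  have "int q = G * (int q div G)" using \<open>G dvd int q\<close> by simp
  moreover have "u = G * (u div G)" using du dG by simp
  ultimately have "G * (int q div G) dvd G * ((u div G) * v)" using dv by (metis mult.assoc)
  then have "int q div G dvd (u div G) * v" using Gpos by simp
  then have "int q div G dvd v" using cop by (simp add: coprime_commute coprime_dvd_mult_right_iff)
  moreover have "int (q div d) = int q div G" using dG by (simp add: zdiv_int)
  ultimately show ?thesis using dq du Gpos d_def by (intro exI[of _ d]) auto
qed

lemma count_bound:
  assumes d: "d > 0" "d dvd q" and q: "q > 0"
  defines "e \<equiv> q div d"
  defines "g \<equiv> gcd d e"
  shows "card {h'. h' < q \<and> int d dvd (int h - int h') \<and> int e dvd (int h + int h')} \<le> (if g dvd 2 * h then g else 0)"
proof (cases "{h'. h' < q \<and> int d dvd (int h - int h') \<and> int e dvd (int h + int h')} = {}")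
  case True then show ?thesis by (simp only: True card.empty)
next
  case False
  let ?A = "{h'. h' < q \<and> int d dvd (int h - int h') \<and> int e dvd (int h + int h')}"
  obtain h0 where h0: "h0 < q" "int d dvd (int h - int h0)" "int e dvd (int h + int h0)" using False by auto
  have qde: "q = d * e" unfolding e_def using d by simp
  have epos: "e > 0" using q qde by (cases e) auto
  have gd: "int g dvd int d" "int g dvd int e" unfolding g_def by (simp_all add: of_nat_dvd_iff)
  have "int g dvd (int h - int h0) + (int h + int h0)"
    using dvd_trans[OF gd(1) h0(2)] dvd_trans[OF gd(2) h0(3)] by (rule dvd_add)
  then have "int g dvd int (2 * h)" by simp
  then have g2h: "g dvd 2 * h" by (simp only: of_nat_dvd_iff)
  define L where "L = lcm d e"
  have gpos: "g > 0" unfolding g_def using d by simp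
  have Lg: "L * g = q" unfolding L_def g_def qde by (simp add: lcm_nat_def)
  have Lpos: "L > 0" using Lg q by (cases L) auto
  have modL: "h' mod L = h0 mod L" if "h' \<in> ?A" for h'
  proof -
    have "int d dvd int h' - int h0"
    proof -
      have m: "int d dvd int h - int h'" using that by simp
      have "int d dvd (int h - int h0) - (int h - int h')" by (rule dvd_diff[OF h0(2) m])
      then show ?thesis by simp
    qed
    moreover have "int e dvd int h' - int h0"
    proof -
      have m: "int e dvd int h + int h'" using that by simp
      have "int e dvd (int h + int h') - (int h + int h0)" by (rule dvd_diff[OF m h0(3)])
      then show ?thesis by simp
    qed
    ultimately have "lcm (int d) (int e) dvd int h' - int h0" by (rule lcm_least)
    then have "int L dvd int h' - int h0" unfolding L_def by (simp add: lcm_int_int_eq)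
    then have "int h' mod int L = int h0 mod int L" by (simp add: mod_eq_dvd_iff)
    then show ?thesis by (metis of_nat_eq_iff zmod_int)
  qed
  have inj: "inj_on (\<lambda>h'. h' div L) ?A"
  proof
    fix x y assume xy: "x \<in> ?A" "y \<in> ?A" "x div L = y div L"
    have "x = L * (x div L) + x mod L" by simp
    also have "\<dots> = L * (y div L) + y mod L" using xy modL by simp
    also have "\<dots> = y" by simp
    finally show "x = y" .
  qed
  have img: "(\<lambda>h'. h' div L) ` ?A \<subseteq> {..<g}"
  proof
    fix z assume "z \<in> (\<lambda>h'. h' div L) ` ?A"
    then obtain h' where h': "h' \<in> ?A" "z = h' div L" by auto
    have "h' < L * g" using h' Lg by simp
    then have "h' div L < g" using Lpos by (simp add: div_less_iff_less_mult mult.commute)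
    then show "z \<in> {..<g}" using h' by simp
  qed
  have "card ?A \<le> g" using card_inj_on_le[OF inj img] by simp
  then show ?thesis using g2h by simp
qed

lemma rel_sym: "int q dvd (int h^2 - int h'^2) \<longleftrightarrow> int q dvd (int h'^2 - int h^2)"
  by (metis dvd_minus_iff minus_diff_eq)

lemma card_rel_bound:
  assumes q: "q > 0"
  shows "real (card {h'. h' < q \<and> int q dvd (int h^2 - int h'^2)})
     \<le> (\<Sum>d\<in>{d. 0 < d \<and> d dvd q}. if gcd d (q div d) dvd 2 * h then real (gcd d (q div d)) else 0)"
proof -
  let ?D = "{d. 0 < d \<and> d dvd q}"
  let ?A = "\<lambda>d. {h'. h' < q \<and> int d dvd (int h - int h') \<and> int (q div d) dvd (int h + int h')}"
  have finD: "finite ?D"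
  proof (rule finite_subset[of _ "{..q}"])
    show "?D \<subseteq> {..q}" using q by (auto dest: dvd_imp_le)
  qed simp
  have sub: "{h'. h' < q \<and> int q dvd (int h^2 - int h'^2)} \<subseteq> (\<Union>d\<in>?D. ?A d)"
  proof
    fix h' assume h': "h' \<in> {h'. h' < q \<and> int q dvd (int h^2 - int h'^2)}"
    have "int h^2 - int h'^2 = (int h - int h') * (int h + int h')" by (simp add: power2_eq_square algebra_simps)
    then have "int q dvd (int h - int h') * (int h + int h')" using h' by simp
    then obtain d where "d > 0" "d dvd q" "int d dvd (int h - int h')" "int (q div d) dvd (int h + int h')"
      using div_split[OF q] by blast
    then show "h' \<in> (\<Union>d\<in>?D. ?A d)" using h' by auto
  qed
  have "card {h'. h' < q \<and> int q dvd (int h^2 - int h'^2)} \<le> card (\<Union>d\<in>?D. ?A d)"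
  proof (rule card_mono[OF _ sub])
    show "finite (\<Union>d\<in>?D. ?A d)" by (rule finite_subset[of _ "{..<q}"]) auto
  qed
  also have "\<dots> \<le> (\<Sum>d\<in>?D. card (?A d))" by (rule card_UN_le[OF finD])
  finally have cl: "card {h'. h' < q \<and> int q dvd (int h^2 - int h'^2)} \<le> (\<Sum>d\<in>?D. card (?A d))" .
  have "real (card {h'. h' < q \<and> int q dvd (int h^2 - int h'^2)}) \<le> real (\<Sum>d\<in>?D. card (?A d))"
    using cl by (simp only: of_nat_le_iff)
  also have "\<dots> = (\<Sum>d\<in>?D. real (card (?A d)))" by (rule of_nat_sum)
  also have "\<dots> \<le> (\<Sum>d\<in>?D. if gcd d (q div d) dvd 2 * h then real (gcd d (q div d)) else 0)"
  proof (rule sum_mono)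
    fix d assume "d \<in> ?D"
    then have dd: "0 < d" "d dvd q" by auto
    have "card (?A d) \<le> (if gcd d (q div d) dvd 2 * h then gcd d (q div d) else 0)"
      by (rule count_bound[OF dd q])
    then show "real (card (?A d)) \<le> (if gcd d (q div d) dvd 2 * h then real (gcd d (q div d)) else 0)"
      by (simp split: if_splits)
  qed
  finally show ?thesis .
qed

lemma pair_bound:
  fixes c :: "nat \<Rightarrow> real"
  assumes q: "q > 0" and c: "\<And>h. 0 \<le> c h"
  shows "(\<Sum>h<q. \<Sum>h'<q. if int q dvd (int h^2 - int h'^2) then c h * c h' else 0)
     \<le> (\<Sum>d\<in>{d. 0 < d \<and> d dvd q}. real (gcd d (q div d)) * (\<Sum>h\<in>{h. h < q \<and> gcd d (q div d) dvd 2 * h}. (c h)\<^sup>2))"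
proof -
  let ?R = "\<lambda>h h'. int q dvd (int h^2 - int h'^2)"
  let ?D = "{d. 0 < d \<and> d dvd q}"
  have "(\<Sum>h<q. \<Sum>h'<q. if ?R h h' then c h * c h' else 0)
      \<le> (\<Sum>h<q. \<Sum>h'<q. (if ?R h h' then (c h)\<^sup>2 else 0) / 2 + (if ?R h h' then (c h')\<^sup>2 else 0) / 2)"
  proof (intro sum_mono)
    fix h h'
    have "c h * c h' \<le> ((c h)\<^sup>2 + (c h')\<^sup>2) / 2"
      using sum_squares_bound[of "c h" "c h'"] by (simp add: power2_eq_square)
    then show "(if ?R h h' then c h * c h' else 0) \<le> (if ?R h h' then (c h)\<^sup>2 else 0) / 2 + (if ?R h h' then (c h')\<^sup>2 else 0) / 2"
      by (simp add: add_divide_distrib)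
  qed
  also have "\<dots> = (\<Sum>h<q. \<Sum>h'<q. (if ?R h h' then (c h)\<^sup>2 else 0)) / 2 + (\<Sum>h<q. \<Sum>h'<q. (if ?R h h' then (c h')\<^sup>2 else 0)) / 2"
    by (simp add: sum.distrib sum_divide_distrib)
  also have "(\<Sum>h<q. \<Sum>h'<q. (if ?R h h' then (c h')\<^sup>2 else 0)) = (\<Sum>h<q. \<Sum>h'<q. (if ?R h h' then (c h)\<^sup>2 else 0))"
    by (subst sum.swap) (simp add: rel_sym)
  finally have step1: "(\<Sum>h<q. \<Sum>h'<q. if ?R h h' then c h * c h' else 0) \<le> (\<Sum>h<q. \<Sum>h'<q. (if ?R h h' then (c h)\<^sup>2 else 0))"
    by simp
  also have "\<dots> = (\<Sum>h<q. (c h)\<^sup>2 * real (card {h'. h' < q \<and> ?R h h'}))"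
  proof (rule sum.cong[OF refl])
    fix h
    have "(\<Sum>h'<q. (if ?R h h' then (c h)\<^sup>2 else 0)) = (\<Sum>h'\<in>{h'\<in>{..<q}. ?R h h'}. (c h)\<^sup>2)"
      by (rule sum.inter_filter[symmetric]) simp
    also have "{h'\<in>{..<q}. ?R h h'} = {h'. h' < q \<and> ?R h h'}" by auto
    finally show "(\<Sum>h'<q. (if ?R h h' then (c h)\<^sup>2 else 0)) = (c h)\<^sup>2 * real (card {h'. h' < q \<and> ?R h h'})"
      by simp
  qed
  also have "\<dots> \<le> (\<Sum>h<q. (c h)\<^sup>2 * (\<Sum>d\<in>?D. if gcd d (q div d) dvd 2 * h then real (gcd d (q div d)) else 0))"
    by (intro sum_mono mult_left_mono card_rel_bound q) simp
  also have "\<dots> = (\<Sum>d\<in>?D. \<Sum>h<q. if gcd d (q div d) dvd 2 * h then real (gcd d (q div d)) * (c h)\<^sup>2 else 0)"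
  proof -
    have "(\<Sum>h<q. (c h)\<^sup>2 * (\<Sum>d\<in>?D. if gcd d (q div d) dvd 2 * h then real (gcd d (q div d)) else 0))
       = (\<Sum>h<q. \<Sum>d\<in>?D. if gcd d (q div d) dvd 2 * h then real (gcd d (q div d)) * (c h)\<^sup>2 else 0)"
      unfolding sum_distrib_left by (intro sum.cong refl) simp
    also have "\<dots> = (\<Sum>d\<in>?D. \<Sum>h<q. if gcd d (q div d) dvd 2 * h then real (gcd d (q div d)) * (c h)\<^sup>2 else 0)"
      by (rule sum.swap)
    finally show ?thesis .
  qed
  also have "\<dots> = (\<Sum>d\<in>?D. real (gcd d (q div d)) * (\<Sum>h\<in>{h. h < q \<and> gcd d (q div d) dvd 2 * h}. (c h)\<^sup>2))"
  proof (rule sum.cong[OF refl])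
    fix d
    have "(\<Sum>h<q. if gcd d (q div d) dvd 2 * h then real (gcd d (q div d)) * (c h)\<^sup>2 else 0)
       = (\<Sum>h\<in>{h\<in>{..<q}. gcd d (q div d) dvd 2 * h}. real (gcd d (q div d)) * (c h)\<^sup>2)"
      by (rule sum.inter_filter[symmetric]) simp
    also have "{h\<in>{..<q}. gcd d (q div d) dvd 2 * h} = {h. h < q \<and> gcd d (q div d) dvd 2 * h}" by auto
    finally show "(\<Sum>h<q. if gcd d (q div d) dvd 2 * h then real (gcd d (q div d)) * (c h)\<^sup>2 else 0)
       = real (gcd d (q div d)) * (\<Sum>h\<in>{h. h < q \<and> gcd d (q div d) dvd 2 * h}. (c h)\<^sup>2)"
      by (simp add: sum_distrib_left)
  qed
  finally show ?thesis .
qed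

lemma reindex_bound:
  fixes F :: "real \<Rightarrow> real" and g q :: nat
  assumes F: "\<And>t. 0 \<le> F t" and g: "g > 0" "g dvd q" and q: "q > 0"
  shows "(\<Sum>h\<in>{h. h < q \<and> g dvd 2 * h}. F (real h / real q)) \<le> (\<Sum>j<2 * q div g. F (real j / real (2 * q div g)))"
proof -
  let ?S = "{h. h < q \<and> g dvd 2 * h}"
  let ?n = "2 * q div g"
  let ?i = "\<lambda>h. 2 * h div g"
  have inj: "inj_on ?i ?S"
  proof
    fix x y assume xy: "x \<in> ?S" "y \<in> ?S" "?i x = ?i y"
    have "2 * x = g * ?i x" using xy(1) by simp
    also have "\<dots> = g * ?i y" using xy(3) by simp
    also have "\<dots> = 2 * y" using xy(2) by simp
    finally show "x = y" by simp
  qed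
  have ng: "real ?n = 2 * real q / real g"
    using g by (simp add: real_of_nat_div dvd_mult)
  have ratio: "real (?i h) / real ?n = real h / real q" if "h \<in> ?S" for h
  proof -
    have A: "real (?i h) = 2 * real h / real g" using that by (simp add: real_of_nat_div)
    have "real (?i h) / real ?n = (2 * real h / real g) / (2 * real q / real g)" using A ng by simp
    also have "\<dots> = real h / real q" using g by (simp add: field_simps)
    finally show "real (?i h) / real ?n = real h / real q" .
  qed
  have val: "F (real h / real q) = F (real (?i h) / real ?n)" if "h \<in> ?S" for h
    using ratio[OF that] by simp
  have img: "?i ` ?S \<subseteq> {..<?n}"
  proof
    fix z assume "z \<in> ?i ` ?S"
    then obtain h where h: "h \<in> ?S" "z = ?i h" by auto
    have "real (?i h) / real ?n = real h / real q" by (rule ratio[OF h(1)])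
    then have "real (?i h) / real ?n < 1" using h q by simp
    moreover have "real ?n > 0" using ng g q by simp
    ultimately have "real (?i h) < real ?n" by (simp add: field_simps)
    then show "z \<in> {..<?n}" using h by simp
  qed
  have "(\<Sum>h\<in>?S. F (real h / real q)) = (\<Sum>h\<in>?S. F (real (?i h) / real ?n))"
    by (rule sum.cong[OF refl]) (rule val)
  also have "\<dots> = (\<Sum>j\<in>?i ` ?S. F (real j / real ?n))"
    by (rule sum.reindex[OF inj, symmetric, unfolded comp_def])
  also have "\<dots> \<le> (\<Sum>j<?n. F (real j / real ?n))"
    by (rule sum_mono2[OF _ img]) (auto intro: F)
  finally show ?thesis .
qed

lemma gcd_sq_le:
  fixes d q :: nat
  assumes "d > 0" "d dvd q" "q > 0"
  shows "gcd d (q div d) * gcd d (q div d) \<le> q"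
proof -
  have "gcd d (q div d) * gcd d (q div d) dvd d * (q div d)" using mult_dvd_mono[of "gcd d (q div d)" d "gcd d (q div d)" "q div d"] by simp
  also have "d * (q div d) = q" using assms by simp
  finally show ?thesis using assms by (intro dvd_imp_le) auto
qed

lemma q_le_divtot:
  fixes q :: nat
  assumes q: "q > 0"
  shows "q \<le> num_divisors q * totient q"
proof -
  have eq: "{d. d dvd q} = {d. 0 < d \<and> d dvd q}" using q by (auto intro: Nat.gr0I)
  have fin: "finite {d. 0 < d \<and> d dvd q}"
  proof (rule finite_subset[of _ "{..q}"])
    show "{d. 0 < d \<and> d dvd q} \<subseteq> {..q}" using q by (auto dest: dvd_imp_le)
  qed simp
  have "q = (\<Sum>d | d dvd q. totient d)" by (rule totient_divisor_sum[symmetric])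
  also have "\<dots> = (\<Sum>d \<in> {d. 0 < d \<and> d dvd q}. totient d)" using eq by simp
  also have "\<dots> \<le> (\<Sum>d \<in> {d. 0 < d \<and> d dvd q}. totient q)"
    by (rule sum_mono) (use q in \<open>auto intro: totient_dvd_mono\<close>)
  also have "\<dots> = num_divisors q * totient q" unfolding num_divisors_def by simp
  finally show ?thesis .
qed

lemma riemann_phi:
  fixes \<phi> :: "real \<Rightarrow> complex"
  assumes ri: "riemann_integrable_T \<phi>"
  shows "0 \<le> L2_norm_sq \<phi>"
    and "\<And>\<delta>. \<delta> > 0 \<Longrightarrow> \<exists>n0. \<forall>n\<ge>n0. (\<Sum>j<n. (cmod (\<phi> (real j / real n)))\<^sup>2) \<le> real n * (L2_norm_sq \<phi> + \<delta>)"
proof -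
  let ?u = "\<lambda>t. (Re (\<phi> t))\<^sup>2" and ?v = "\<lambda>t. (Im (\<phi> t))\<^sup>2"
  have ru: "riemann_integrable_real ?u 0 1" using ri riemann_sq unfolding riemann_integrable_T_def by blast
  have rv: "riemann_integrable_real ?v 0 1" using ri riemann_sq unfolding riemann_integrable_T_def by blast
  note MU = riemann_main[of ?u, OF _ ru] and MV = riemann_main[of ?v, OF _ rv]
  have iu: "?u integrable_on {0..1}" by (rule MU(1)) simp
  have iv: "?v integrable_on {0..1}" by (rule MV(1)) simp
  have L: "L2_norm_sq \<phi> = integral {0..1} ?u + integral {0..1} ?v"
    unfolding L2_norm_sq_def cmod_power2 by (rule integral_add[OF iu iv])
  show "0 \<le> L2_norm_sq \<phi>" unfolding L
    using integral_nonneg[OF iu] integral_nonneg[OF iv] by fastforce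
  fix \<delta> :: real assume d: "\<delta> > 0"
  obtain n1 where n1: "\<forall>n\<ge>n1. (\<Sum>j<n. ?u (real j / real n)) \<le> real n * (integral {0..1} ?u + \<delta>/2)"
    using MU(2)[of "\<delta>/2"] d by auto
  obtain n2 where n2: "\<forall>n\<ge>n2. (\<Sum>j<n. ?v (real j / real n)) \<le> real n * (integral {0..1} ?v + \<delta>/2)"
    using MV(2)[of "\<delta>/2"] d by auto
  show "\<exists>n0. \<forall>n\<ge>n0. (\<Sum>j<n. (cmod (\<phi> (real j / real n)))\<^sup>2) \<le> real n * (L2_norm_sq \<phi> + \<delta>)"
  proof (intro exI allI impI)
    fix n assume n: "max n1 n2 \<le> n"
    have "(\<Sum>j<n. (cmod (\<phi> (real j / real n)))\<^sup>2) = (\<Sum>j<n. ?u (real j / real n)) + (\<Sum>j<n. ?v (real j / real n))"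
      by (simp add: cmod_power2 sum.distrib)
    also have "\<dots> \<le> real n * (integral {0..1} ?u + \<delta>/2) + real n * (integral {0..1} ?v + \<delta>/2)"
      using n1 n2 n by (intro add_mono) auto
    also have "\<dots> = real n * (L2_norm_sq \<phi> + \<delta>)" unfolding L by (simp add: algebra_simps)
    finally show "(\<Sum>j<n. (cmod (\<phi> (real j / real n)))\<^sup>2) \<le> real n * (L2_norm_sq \<phi> + \<delta>)" .
  qed
qed

lemma per_q:
  fixes \<phi> :: "real \<Rightarrow> complex" and q N n0 :: nat and K L \<delta> :: real
  assumes q: "q > 0" and Nq: "num_divisors q \<le> N" and Kpos: "K > 0" and Ld: "0 \<le> L + \<delta>"
    and R: "\<forall>n\<ge>n0. (\<Sum>j<n. (cmod (\<phi> (real j / real n)))\<^sup>2) \<le> real n * (L + \<delta>)"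
    and qn0: "n0 * n0 \<le> q"
  shows "real (card {p \<in> units_mod q. cmod (gsum \<phi> p q) / sqrt (real q) > K}) / real (totient q)
     \<le> 2 * real N ^ 2 * (L + \<delta>) / K\<^sup>2"
proof -
  let ?D = "{d. 0 < d \<and> d dvd q}"
  let ?S = "{p \<in> units_mod q. cmod (gsum \<phi> p q) / sqrt (real q) > K}"
  let ?a = "\<lambda>h. \<phi> (real h / real q)"
  define c where "c = (\<lambda>h. cmod (?a h))"
  let ?R = "\<lambda>h h'. int q dvd (int h^2 - int h'^2)"
  let ?X = "(\<Sum>p\<in>{1..q}. (cmod (gsum \<phi> p q))\<^sup>2)"
  let ?Z = "(\<Sum>h<q. \<Sum>h'<q. if ?R h h' then ?a h * cnj (?a h') else 0)"
  have finD: "finite ?D"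
  proof (rule finite_subset[of _ "{..q}"])
    show "?D \<subseteq> {..q}" using q by (auto dest: dvd_imp_le)
  qed simp
  have X0: "0 \<le> ?X" by (intro sum_nonneg) simp
  have "?X = cmod (complex_of_real ?X)" by (subst norm_of_real) (use X0 in simp)
  also have "\<dots> = cmod (of_nat q * ?Z)" using parseval[OF q, of \<phi>] by simp
  also have "\<dots> = real q * cmod ?Z" by (simp add: norm_mult)
  also have "cmod ?Z \<le> (\<Sum>h<q. \<Sum>h'<q. if ?R h h' then c h * c h' else 0)"
  proof -
    have "cmod ?Z \<le> (\<Sum>h<q. cmod (\<Sum>h'<q. if ?R h h' then ?a h * cnj (?a h') else 0))" by (rule norm_sum)
    also have "\<dots> \<le> (\<Sum>h<q. \<Sum>h'<q. cmod (if ?R h h' then ?a h * cnj (?a h') else 0))"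
      by (intro sum_mono norm_sum)
    also have "\<dots> = (\<Sum>h<q. \<Sum>h'<q. if ?R h h' then c h * c h' else 0)"
      unfolding c_def by (intro sum.cong refl) (simp add: norm_mult)
    finally show ?thesis .
  qed
  then have "real q * cmod ?Z \<le> real q * (\<Sum>h<q. \<Sum>h'<q. if ?R h h' then c h * c h' else 0)"
    by (intro mult_left_mono) auto
  also have "\<dots> \<le> real q * (\<Sum>d\<in>?D. real (gcd d (q div d)) * (\<Sum>h\<in>{h. h < q \<and> gcd d (q div d) dvd 2 * h}. (c h)\<^sup>2))"
    by (intro mult_left_mono pair_bound q) (auto simp: c_def)
  also have "\<dots> \<le> real q * (\<Sum>d\<in>?D. 2 * real q * (L + \<delta>))"
  proof (intro mult_left_mono sum_mono)
    fix d assume "d \<in> ?D"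
    then have d: "0 < d" "d dvd q" by auto
    define g where "g = gcd d (q div d)"
    define n where "n = 2 * q div g"
    have gpos: "g > 0" using d unfolding g_def by simp
    have gq: "g dvd q" unfolding g_def using d by (metis dvd_trans gcd_dvd1)
    have ng: "n * g = 2 * q" unfolding n_def using gq by simp
    have gg: "g * g \<le> q" unfolding g_def by (rule gcd_sq_le[OF d q])
    have "q * (g * g) \<le> (n * n) * (g * g)"
    proof -
      have "q * (g * g) \<le> q * q" using gg by simp
      also have "\<dots> \<le> (2 * q) * (2 * q)" by simp
      also have "\<dots> = (n * n) * (g * g)" using ng by (metis mult.assoc mult.commute)
      finally show ?thesis .
    qed
    then have "q \<le> n * n" using gpos by simp
    then have "n0 * n0 \<le> n * n" using qn0 by simp
    then have nn0: "n0 \<le> n" using power2_le_imp_le[of n0 n] by (simp add: power2_eq_square)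
    have "(\<Sum>h\<in>{h. h < q \<and> g dvd 2 * h}. (c h)\<^sup>2) = (\<Sum>h\<in>{h. h < q \<and> g dvd 2 * h}. (\<lambda>t. (cmod (\<phi> t))\<^sup>2) (real h / real q))"
      unfolding c_def by simp
    also have "\<dots> \<le> (\<Sum>j<n. (\<lambda>t. (cmod (\<phi> t))\<^sup>2) (real j / real n))"
      unfolding n_def by (rule reindex_bound[OF _ gpos gq q]) simp
    also have "\<dots> \<le> real n * (L + \<delta>)" using R nn0 by simp
    finally have "real g * (\<Sum>h\<in>{h. h < q \<and> g dvd 2 * h}. (c h)\<^sup>2) \<le> real g * (real n * (L + \<delta>))"
      by (intro mult_left_mono) auto
    also have "\<dots> = 2 * real q * (L + \<delta>)"
    proof -
      have "real g * real n = 2 * real q" using ng by (metis mult.commute of_nat_mult of_nat_numeral)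
      then show ?thesis by (metis mult.assoc)
    qed
    finally show "real (gcd d (q div d)) * (\<Sum>h\<in>{h. h < q \<and> gcd d (q div d) dvd 2 * h}. (c h)\<^sup>2) \<le> 2 * real q * (L + \<delta>)"
      unfolding g_def .
  qed simp
  also have "\<dots> = real q * (real (num_divisors q) * (2 * real q * (L + \<delta>)))"
    unfolding num_divisors_def by simp
  also have "\<dots> \<le> real q * (real N * (2 * real q * (L + \<delta>)))"
  proof (rule mult_left_mono)
    have "0 \<le> 2 * real q * (L + \<delta>)" using Ld by simp
    then show "real (num_divisors q) * (2 * real q * (L + \<delta>)) \<le> real N * (2 * real q * (L + \<delta>))"
      using Nq by (intro mult_right_mono) auto
  qed simp
  finally have Xb: "?X \<le> real q * (real N * (2 * real q * (L + \<delta>)))" .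
  have sqq: "sqrt (real q) > 0" using q by simp
  have "real (card ?S) * (K\<^sup>2 * real q) = (\<Sum>p\<in>?S. K\<^sup>2 * real q)" by simp
  also have "\<dots> \<le> (\<Sum>p\<in>?S. (cmod (gsum \<phi> p q))\<^sup>2)"
  proof (rule sum_mono)
    fix p assume "p \<in> ?S"
    then have "K < cmod (gsum \<phi> p q) / sqrt (real q)" by simp
    then have "K * sqrt (real q) < cmod (gsum \<phi> p q)" using sqq by (simp add: field_simps)
    then have "(K * sqrt (real q))\<^sup>2 \<le> (cmod (gsum \<phi> p q))\<^sup>2"
      using Kpos sqq by (intro power_mono) auto
    then show "K\<^sup>2 * real q \<le> (cmod (gsum \<phi> p q))\<^sup>2" by (simp add: power_mult_distrib)
  qed
  also have "\<dots> \<le> ?X"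
    by (rule sum_mono2) (auto simp: units_mod_def)
  finally have "real (card ?S) * (K\<^sup>2 * real q) \<le> real q * (real N * (2 * real q * (L + \<delta>)))" using Xb by simp
  then have "real q * (real (card ?S) * K\<^sup>2) \<le> real q * (2 * real N * real q * (L + \<delta>))" by (simp add: algebra_simps)
  then have C1: "real (card ?S) * K\<^sup>2 \<le> 2 * real N * real q * (L + \<delta>)" using q by simp
  have "q \<le> num_divisors q * totient q" by (rule q_le_divtot[OF q])
  also have "\<dots> \<le> N * totient q" using Nq by simp
  finally have "real q \<le> real N * real (totient q)" by (metis of_nat_le_iff of_nat_mult)
  then have "2 * real N * real q * (L + \<delta>) \<le> 2 * real N * (real N * real (totient q)) * (L + \<delta>)"
    using Ld by (intro mult_right_mono mult_left_mono) auto
  with C1 have C2: "real (card ?S) * K\<^sup>2 \<le> 2 * real N ^ 2 * (L + \<delta>) * real (totient q)"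
    by (simp add: power2_eq_square algebra_simps)
  have T: "real (totient q) > 0" using q by simp
  show ?thesis using C2 T Kpos by (simp add: field_simps)
qed

theorem lemma6p1:
  fixes N :: nat
  assumes "N \<ge> 1"
  shows "\<forall>\<epsilon>>0. \<exists>K>0. \<forall>\<phi> :: real \<Rightarrow> complex. riemann_integrable_T \<phi> \<longrightarrow>
     Limsup (inf sequentially (principal {q. num_divisors q \<le> N}))
       (\<lambda>q. ereal (real (card {p \<in> units_mod q. cmod (gsum \<phi> p q) / sqrt (real q) > K})
                    / real (totient q)))
     \<le> ereal (\<epsilon> * L2_norm_sq \<phi>)"
proof (intro allI impI)
  fix \<epsilon> :: real assume eps: "\<epsilon> > 0"
  define K where "K = sqrt (2 * real N ^ 2 / \<epsilon> + 1)"
  have K2: "K\<^sup>2 = 2 * real N ^ 2 / \<epsilon> + 1" unfolding K_def using eps by (simp add: add_nonneg_nonneg)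
  have Kpos: "K > 0" unfolding K_def using eps by (simp add: add_nonneg_pos)
  have KN: "2 * real N ^ 2 / K\<^sup>2 \<le> \<epsilon>"
  proof -
    have "2 * real N ^ 2 \<le> \<epsilon> * K\<^sup>2" unfolding K2 using eps by (simp add: field_simps)
    then show ?thesis using Kpos by (simp add: field_simps)
  qed
  show "\<exists>K>0. \<forall>\<phi> :: real \<Rightarrow> complex. riemann_integrable_T \<phi> \<longrightarrow>
     Limsup (inf sequentially (principal {q. num_divisors q \<le> N}))
       (\<lambda>q. ereal (real (card {p \<in> units_mod q. cmod (gsum \<phi> p q) / sqrt (real q) > K})
                    / real (totient q)))
     \<le> ereal (\<epsilon> * L2_norm_sq \<phi>)"
  proof (intro exI[of _ K] conjI allI impI Kpos)
    fix \<phi> :: "real \<Rightarrow> complex" assume ri: "riemann_integrable_T \<phi>"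
    let ?L = "L2_norm_sq \<phi>"
    have L0: "0 \<le> ?L" by (rule riemann_phi(1)[OF ri])
    show "Limsup (inf sequentially (principal {q. num_divisors q \<le> N}))
       (\<lambda>q. ereal (real (card {p \<in> units_mod q. cmod (gsum \<phi> p q) / sqrt (real q) > K})
                    / real (totient q)))
     \<le> ereal (\<epsilon> * ?L)"
    proof (rule ereal_le_epsilon2)
      fix e :: real assume e: "e > 0"
      define \<delta> where "\<delta> = e / \<epsilon>"
      have d: "\<delta> > 0" unfolding \<delta>_def using e eps by simp
      obtain n0 where n0: "\<forall>n\<ge>n0. (\<Sum>j<n. (cmod (\<phi> (real j / real n)))\<^sup>2) \<le> real n * (?L + \<delta>)"
        using riemann_phi(2)[OF ri d] by blast
      have ev: "eventually (\<lambda>q. ereal (real (card {p \<in> units_mod q. cmod (gsum \<phi> p q) / sqrt (real q) > K})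
                    / real (totient q)) \<le> ereal (\<epsilon> * ?L + e))
              (inf sequentially (principal {q. num_divisors q \<le> N}))"
        unfolding eventually_inf_principal eventually_sequentially
      proof (intro exI[of _ "n0 * n0 + 1"] allI impI)
        fix q assume q: "n0 * n0 + 1 \<le> q" "q \<in> {q. num_divisors q \<le> N}"
        have "real (card {p \<in> units_mod q. cmod (gsum \<phi> p q) / sqrt (real q) > K}) / real (totient q)
           \<le> 2 * real N ^ 2 * (?L + \<delta>) / K\<^sup>2"
          by (rule per_q[OF _ _ Kpos _ n0]) (use q L0 d in auto)
        also have "\<dots> = (2 * real N ^ 2 / K\<^sup>2) * (?L + \<delta>)" by simp
        also have "\<dots> \<le> \<epsilon> * (?L + \<delta>)" using KN L0 d by (intro mult_right_mono) auto
        also have "\<dots> = \<epsilon> * ?L + e" unfolding \<delta>_def using eps by (simp add: field_simps)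
        finally show "ereal (real (card {p \<in> units_mod q. cmod (gsum \<phi> p q) / sqrt (real q) > K})
                    / real (totient q)) \<le> ereal (\<epsilon> * ?L + e)" by simp
      qed
      have "Limsup (inf sequentially (principal {q. num_divisors q \<le> N}))
       (\<lambda>q. ereal (real (card {p \<in> units_mod q. cmod (gsum \<phi> p q) / sqrt (real q) > K})
                    / real (totient q))) \<le> ereal (\<epsilon> * ?L + e)"
        by (rule Limsup_bounded[OF ev])
      then show "Limsup (inf sequentially (principal {q. num_divisors q \<le> N}))
       (\<lambda>q. ereal (real (card {p \<in> units_mod q. cmod (gsum \<phi> p q) / sqrt (real q) > K})
                    / real (totient q))) \<le> ereal (\<epsilon> * ?L) + ereal e" by simp
    qed
  qed
qed

end
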